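(* Consider the scheduling policy SIS, with ties broken arbitrarily, with a transmission oracle in $TO_h$ and proactive hearing control $P$, against an adversary $\mathcal{A}(b,r)$ with $0\le r<1/h$. Define $k_1=b$ and $k_{i+1}=\frac{k_i+b}{1-rh}$. When a packet $p$ arrives at the $i$-th queue $v_i$ on its path, then there are at most $k_i-1$ packets requiring any queue in the path of $p$ (i.e., for each node on the path of $p$, at most $k_i-1$ packets in the system that still have to pass through that node) with a priority higher than that of $p$.
   Context: Multi-hop radio network model: a network is a simple graph with $n$ nodes; time is divided into synchronous rounds. Packets are injected by an adversary, each with its complete path fixed at injection. Each node keeps a single, unbounded queue of packets to be forwarded. In each round a node transmits at most one message; a node $w$ hears a message of a neighbor $u$ in a round iff $u$ is the only neighbor of $w$ transmitting in that round. When $v$ transmits a packet whose next node on its path is $w$ and $w$ hears it, the packet leaves $v$ and is absorbed at $w$ or appended to $w$'s queue. A transmission oracle tells each node in each round whether to transmit. Proactive hearing control $P$: in a round in which the oracle tells $v$ to transmit, $v$ first learns which neighbors would hear its transmission, and the scheduling policy selects a packet among the queued packets whose next node is one of these neighbors (if any), which is then transmitted and heard. A directed link $(u,w)$ is up in a round if a packet transmitted by $u$ to $w$ would be heard by $w$; $TO_h$ is the class of transmission oracles under which every link is up at least once in every $h$ consecutive rounds. An adversary $\mathcal{A}(b,r)$ ($b$ positive integer, $0\le r\le1$) specifies each injected packet's path and satisfies: for every interval $\tau$ of consecutive rounds and every node $v$, the number of packets injected during $\tau$ whose path contains $v$ is at most $r|\tau|+b$. SIS (Shortest-In-System) gives priority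 to the packet that has been in the system for the shortest time. *)

theory Defs
  imports Main "HOL.Real"
begin

definition simple_graph :: "'v set \<Rightarrow> ('v \<Rightarrow> 'v \<Rightarrow> bool) \<Rightarrow> bool" where
  "simple_graph V E \<longleftrightarrow> finite V \<and>
     (\<forall>u w. E u w \<longrightarrow> u \<in> V \<and> w \<in> V \<and> u \<noteq> w \<and> E w u)"

definition valid_path :: "'v set \<Rightarrow> ('v \<Rightarrow> 'v \<Rightarrow> bool) \<Rightarrow> 'v list \<Rightarrow> bool" where
  "valid_path V E xs \<longleftrightarrow> 2 \<le> length xs \<and> distinct xs \<and> set xs \<subseteq> V \<and>
     (\<forall>j. Suc j < length xs \<longrightarrow> E (xs ! j) (xs ! Suc j))"

text \<open>Transmission oracle tr t v: whether node v is told to transmit in round t.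
w hears u in round t iff u transmits and u is the only neighbour of w transmitting.\<close>
definition link_up :: "('v \<Rightarrow> 'v \<Rightarrow> bool) \<Rightarrow> (nat \<Rightarrow> 'v \<Rightarrow> bool) \<Rightarrow> nat \<Rightarrow> 'v \<Rightarrow> 'v \<Rightarrow> bool" where
  "link_up E tr t u w \<longleftrightarrow> E u w \<and> tr t u \<and> (\<forall>x. E x w \<and> tr t x \<longrightarrow> x = u)"

definition in_TO :: "('v \<Rightarrow> 'v \<Rightarrow> bool) \<Rightarrow> nat \<Rightarrow> (nat \<Rightarrow> 'v \<Rightarrow> bool) \<Rightarrow> bool" where
  "in_TO E h tr \<longleftrightarrow>
     (\<forall>u w s. E u w \<longrightarrow> (\<exists>t. s \<le> t \<and> t < s + h \<and> link_up E tr t u w))"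

text \<open>Adversary A(b,r): Pk is the set of injected packets, injt q the injection round
and path q the path of packet q.\<close>
definition adversary :: "'p set \<Rightarrow> ('p \<Rightarrow> 'v list) \<Rightarrow> ('p \<Rightarrow> nat) \<Rightarrow> nat \<Rightarrow> real \<Rightarrow> bool" where
  "adversary Pk path injt b r \<longleftrightarrow>
     (\<forall>s l v. finite {q \<in> Pk. s \<le> injt q \<and> injt q < s + l \<and> v \<in> set (path q)} \<and>
        real (card {q \<in> Pk. s \<le> injt q \<and> injt q < s + l \<and> v \<in> set (path q)})
          \<le> r * real l + real b)"

text \<open>SIS priority with ties broken arbitrarily (but fixed): hi p q means p has higher
priority than q; a strict total order on the packets in which packets injected later
have higher priority.\<close>
definition sis_priority :: "'p set \<Rightarrow> ('p \<Rightarrow> nat) \<Rightarrow> ('p \<Rightarrow> 'p \<Rightarrow> bool) \<Rightarrow> bool" where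
  "sis_priority Pk injt hi \<longleftrightarrow>
     (\<forall>p\<in>Pk. \<forall>q\<in>Pk. hi p q \<longrightarrow> \<not> hi q p) \<and>
     (\<forall>p\<in>Pk. \<forall>q\<in>Pk. \<forall>x\<in>Pk. hi p q \<longrightarrow> hi q x \<longrightarrow> hi p x) \<and>
     (\<forall>p\<in>Pk. \<forall>q\<in>Pk. p \<noteq> q \<longrightarrow> hi p q \<or> hi q p) \<and>
     (\<forall>p\<in>Pk. \<forall>q\<in>Pk. injt q < injt p \<longrightarrow> hi p q)"

text \<open>Execution state: pos t q is the index (in path q) of the node in whose queue q is
at the beginning of round t (for t \<ge> injt q).  A packet injected in round t is in the
queue of its first node at the beginning of round t.  It is absorbed once it reaches
the last node of its path.\<close>
definition in_sys :: "'p set \<Rightarrow> ('p \<Rightarrow> 'v list) \<Rightarrow> ('p \<Rightarrow> nat) \<Rightarrow> (nat \<Rightarrow> 'p \<Rightarrow> nat)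
    \<Rightarrow> nat \<Rightarrow> 'p \<Rightarrow> bool" where
  "in_sys Pk path injt pos t q \<longleftrightarrow> q \<in> Pk \<and> injt q \<le> t \<and> pos t q < length (path q) - 1"

text \<open>Proactive hearing control: in round t a node v told to transmit can send only a
queued packet whose next node would hear it.\<close>
definition eligible :: "('v \<Rightarrow> 'v \<Rightarrow> bool) \<Rightarrow> (nat \<Rightarrow> 'v \<Rightarrow> bool) \<Rightarrow> 'p set \<Rightarrow> ('p \<Rightarrow> 'v list)
    \<Rightarrow> ('p \<Rightarrow> nat) \<Rightarrow> (nat \<Rightarrow> 'p \<Rightarrow> nat) \<Rightarrow> nat \<Rightarrow> 'v \<Rightarrow> 'p \<Rightarrow> bool" where
  "eligible E tr Pk path injt pos t v q \<longleftrightarrow>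
     in_sys Pk path injt pos t q \<and> path q ! pos t q = v \<and>
     tr t v \<and> link_up E tr t v (path q ! Suc (pos t q))"

definition sent :: "('v \<Rightarrow> 'v \<Rightarrow> bool) \<Rightarrow> (nat \<Rightarrow> 'v \<Rightarrow> bool) \<Rightarrow> 'p set \<Rightarrow> ('p \<Rightarrow> 'v list)
    \<Rightarrow> ('p \<Rightarrow> nat) \<Rightarrow> ('p \<Rightarrow> 'p \<Rightarrow> bool) \<Rightarrow> (nat \<Rightarrow> 'p \<Rightarrow> nat) \<Rightarrow> nat \<Rightarrow> 'p \<Rightarrow> bool" where
  "sent E tr Pk path injt hi pos t q \<longleftrightarrow>
     eligible E tr Pk path injt pos t (path q ! pos t q) q \<and>
     (\<forall>q'. eligible E tr Pk path injt pos t (path q ! pos t q) q' \<and> q' \<noteq> q \<longrightarrow> hi q q')"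

definition sis_execution :: "('v \<Rightarrow> 'v \<Rightarrow> bool) \<Rightarrow> (nat \<Rightarrow> 'v \<Rightarrow> bool) \<Rightarrow> 'p set
    \<Rightarrow> ('p \<Rightarrow> 'v list) \<Rightarrow> ('p \<Rightarrow> nat) \<Rightarrow> ('p \<Rightarrow> 'p \<Rightarrow> bool) \<Rightarrow> (nat \<Rightarrow> 'p \<Rightarrow> nat) \<Rightarrow> bool" where
  "sis_execution E tr Pk path injt hi pos \<longleftrightarrow>
     (\<forall>q\<in>Pk. \<forall>t. (t \<le> injt q \<longrightarrow> pos t q = 0) \<and>
        (injt q \<le> t \<longrightarrow> pos (Suc t) q =
           (if sent E tr Pk path injt hi pos t q then Suc (pos t q) else pos t q)))"

definition arrives :: "'p set \<Rightarrow> ('p \<Rightarrow> 'v list) \<Rightarrow> ('p \<Rightarrow> nat) \<Rightarrow> (nat \<Rightarrow> 'p \<Rightarrow> nat)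
    \<Rightarrow> nat \<Rightarrow> 'p \<Rightarrow> nat \<Rightarrow> bool" where
  "arrives Pk path injt pos t p j \<longleftrightarrow>
     in_sys Pk path injt pos t p \<and> pos t p = j \<and> (t = injt p \<or> pos (t - 1) p \<noteq> j)"

text \<open>kseq b r h j = k_(j+1): k_1 = b, k_(i+1) = (k_i + b)/(1 - r h).\<close>
primrec kseq :: "nat \<Rightarrow> real \<Rightarrow> nat \<Rightarrow> nat \<Rightarrow> real" where
  "kseq b r h 0 = real b"
| "kseq b r h (Suc j) = (kseq b r h j + real b) / (1 - r * real h)"

text \<open>Packets in the system at the beginning of round t with priority higher than p
that still have to pass through node u (u in the remaining part of their path,
including the node where they are currently queued).\<close>
definition higher_requiring :: "'p set \<Rightarrow> ('p \<Rightarrow> 'v list) \<Rightarrow> ('p \<Rightarrow> nat) \<Rightarrow> ('p \<Rightarrow> 'p \<Rightarrow> bool)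
    \<Rightarrow> (nat \<Rightarrow> 'p \<Rightarrow> nat) \<Rightarrow> nat \<Rightarrow> 'p \<Rightarrow> 'v \<Rightarrow> 'p set" where
  "higher_requiring Pk path injt hi pos t p u =
     {q. q \<noteq> p \<and> in_sys Pk path injt pos t q \<and> hi q p \<and> u \<in> set (drop (pos t q) (path q))}"

end

theory Submission
  imports Defs
begin

locale sis_setting =
  fixes V :: "'v set" and E :: "'v \<Rightarrow> 'v \<Rightarrow> bool"
    and tr :: "nat \<Rightarrow> 'v \<Rightarrow> bool" and h :: nat
    and Pk :: "'p set" and path :: "'p \<Rightarrow> 'v list" and injt :: "'p \<Rightarrow> nat"
    and b :: nat and r :: real
    and hi :: "'p \<Rightarrow> 'p \<Rightarrow> bool" and pos :: "nat \<Rightarrow> 'p \<Rightarrow> nat"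
  assumes vp: "\<forall>q\<in>Pk. valid_path V E (path q)"
    and h1: "1 \<le> h" and TO: "in_TO E h tr"
    and r0: "0 \<le> r" and rh: "r < 1 / real h"
    and adv: "adversary Pk path injt b r"
    and sis: "sis_priority Pk injt hi"
    and ex: "sis_execution E tr Pk path injt hi pos"
begin

lemma pos_injt: "q \<in> Pk \<Longrightarrow> pos (injt q) q = 0"
  using ex unfolding sis_execution_def by blast

lemma pos_Suc: "q \<in> Pk \<Longrightarrow> injt q \<le> s \<Longrightarrow>
   pos (Suc s) q = (if sent E tr Pk path injt hi pos s q then Suc (pos s q) else pos s q)"
  using ex unfolding sis_execution_def by blast

lemma pos_mono: assumes "q \<in> Pk" "injt q \<le> s" "s \<le> s'" shows "pos s q \<le> pos s' q"
  using assms(3)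
proof (induction s' rule: dec_induct)
  case base then show ?case by simp
next
  case (step n)
  then show ?case using pos_Suc[of q n] assms by (auto split: if_splits)
qed

lemma pos_step: "q \<in> Pk \<Longrightarrow> injt q \<le> s \<Longrightarrow> pos (Suc s) q \<le> Suc (pos s q)"
  using pos_Suc[of q s] by auto

lemma ivt: assumes "q \<in> Pk" "injt q \<le> s" "i \<le> pos s q"
  shows "\<exists>s'. injt q \<le> s' \<and> s' \<le> s \<and> pos s' q = i"
  using assms(2,3)
proof (induction s rule: dec_induct)
  case base then show ?case using pos_injt[OF assms(1)] by auto
next
  case (step n)
  show ?case
  proof (cases "i \<le> pos n q")
    case True then show ?thesis using step by (meson le_Suc_eq)
  next
    case False
    then have "pos (Suc n) q = i" using step.prems pos_step[OF assms(1) step.hyps(1)] by linarith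
    then show ?thesis using step.hyps by (intro exI[of _ "Suc n"]) auto
  qed
qed

lemma fin_inj: "finite {q\<in>Pk. injt q \<le> s \<and> v \<in> set (path q)}"
proof -
  have "finite {q \<in> Pk. 0 \<le> injt q \<and> injt q < 0 + Suc s \<and> v \<in> set (path q)}"
    using adv unfolding adversary_def by blast
  moreover have "{q\<in>Pk. injt q \<le> s \<and> v \<in> set (path q)} = {q \<in> Pk. 0 \<le> injt q \<and> injt q < 0 + Suc s \<and> v \<in> set (path q)}"
    by auto
  ultimately show ?thesis by simp
qed

lemma has_max: "finite S \<Longrightarrow> S \<noteq> {} \<Longrightarrow> S \<subseteq> Pk \<Longrightarrow> \<exists>q\<in>S. \<forall>q'\<in>S. q' \<noteq> q \<longrightarrow> hi q q'"
proof (induction S rule: finite_ne_induct)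
  case (singleton x) then show ?case by auto
next
  case (insert x F)
  then obtain q where q: "q \<in> F" "\<forall>q'\<in>F. q' \<noteq> q \<longrightarrow> hi q q'" by auto
  have tot: "\<forall>p\<in>Pk. \<forall>q\<in>Pk. p \<noteq> q \<longrightarrow> hi p q \<or> hi q p"
   and tra: "\<forall>p\<in>Pk. \<forall>q\<in>Pk. \<forall>x\<in>Pk. hi p q \<longrightarrow> hi q x \<longrightarrow> hi p x"
    using sis unfolding sis_priority_def by blast+
  show ?case
  proof (cases "hi q x")
    case True then show ?thesis using q by auto
  next
    case False
    then have "hi x q" using tot insert q by (metis insert_subset subsetD)
    then have "\<forall>q'\<in>insert x F. q' \<noteq> x \<longrightarrow> hi x q'"
      using q tra insert by (metis insert_iff insert_subset subsetD)
    then show ?thesis by auto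
  qed
qed

lemma nat_lt_div: "0 < (h::nat) \<Longrightarrow> n < h * (n div h + 1)"
proof -
  assume "0 < h"
  have a: "h * (n div h) + n mod h = n" by simp
  have b: "n mod h < h" using \<open>0 < h\<close> by simp
  have c: "h * (n div h + 1) = h * (n div h) + h" by simp
  show ?thesis using a b c by linarith
qed

lemma in_drop_nth: "n < length xs \<Longrightarrow> xs ! n \<in> set (drop n xs)"
  by (metis Cons_nth_drop_Suc list.set_intros(1))

lemma rle1: "r < 1"
proof -
  have "1 / real h \<le> 1" using h1 by simp
  then show ?thesis using rh by linarith
qed

lemma rh_lt: "r * real h < 1"
proof -
  have "real h > 0" using h1 by simp
  then show ?thesis using rh by (simp add: field_simps)
qed

lemma main:
  assumes pP: "p \<in> Pk"
  shows "\<forall>t u. arrives Pk path injt pos t p j \<longrightarrow> u \<in> set (path p) \<longrightarrow>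
     finite (higher_requiring Pk path injt hi pos t p u) \<and>
     real (card (higher_requiring Pk path injt hi pos t p u)) \<le> kseq b r h j - 1"
proof (induction j)
  case 0
  show ?case
  proof (intro allI impI)
    fix t u
    assume arr: "arrives Pk path injt pos t p 0" and u: "u \<in> set (path p)"
    have ins: "in_sys Pk path injt pos t p" and pt: "pos t p = 0"
      and dis: "t = injt p \<or> pos (t - 1) p \<noteq> 0"
      using arr unfolding arrives_def by auto
    have it: "injt p \<le> t" using ins unfolding in_sys_def by auto
    have teq: "t = injt p"
    proof (rule ccontr)
      assume "t \<noteq> injt p"
      then have "injt p \<le> t - 1" "pos (t-1) p \<noteq> 0" using it dis by auto
      moreover have "pos (t-1) p \<le> pos t p" using pos_mono[OF pP \<open>injt p \<le> t - 1\<close>] by simp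
      ultimately show False using pt by simp
    qed
    define S where "S = {q \<in> Pk. t \<le> injt q \<and> injt q < t + 1 \<and> u \<in> set (path q)}"
    have finS: "finite S" and cS: "real (card S) \<le> r * real 1 + real b"
      using adv unfolding adversary_def S_def by blast+
    have pS: "p \<in> S" using pP u teq unfolding S_def by auto
    have asym: "\<forall>p\<in>Pk. \<forall>q\<in>Pk. hi p q \<longrightarrow> \<not> hi q p"
      and sis4: "\<forall>p\<in>Pk. \<forall>q\<in>Pk. injt q < injt p \<longrightarrow> hi p q"
      using sis unfolding sis_priority_def by blast+
    have sub: "higher_requiring Pk path injt hi pos t p u \<subseteq> S - {p}"
    proof
      fix q assume q: "q \<in> higher_requiring Pk path injt hi pos t p u"
      then have qP: "q \<in> Pk" "injt q \<le> t" "hi q p" "q \<noteq> p" "u \<in> set (drop (pos t q) (path q))"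
        unfolding higher_requiring_def in_sys_def by auto
      have "\<not> injt q < t" using qP asym sis4 pP teq by metis
      then show "q \<in> S - {p}" using qP unfolding S_def by (auto dest: in_set_dropD)
    qed
    have fin: "finite (higher_requiring Pk path injt hi pos t p u)"
      using sub finS by (meson finite_Diff rev_finite_subset)
    have "card (higher_requiring Pk path injt hi pos t p u) \<le> card (S - {p})"
      using sub finS by (simp add: card_mono)
    also have "card (S - {p}) = card S - 1" using pS finS by simp
    finally have c1: "card (higher_requiring Pk path injt hi pos t p u) \<le> card S - 1" .
    have "card S \<ge> 1" using pS finS by (metis One_nat_def Suc_leI card_gt_0_iff empty_iff)
    then have "real (card (higher_requiring Pk path injt hi pos t p u)) \<le> real (card S) - 1"
      using c1 by linarith
    then have "real (card (higher_requiring Pk path injt hi pos t p u)) < real b"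
      using cS rle1 by simp
    then have "card (higher_requiring Pk path injt hi pos t p u) < b"
      by linarith
    then have "card (higher_requiring Pk path injt hi pos t p u) + 1 \<le> b"
      by linarith
    then have "real (card (higher_requiring Pk path injt hi pos t p u)) + 1 \<le> real b"
      by linarith
    then have "real (card (higher_requiring Pk path injt hi pos t p u)) \<le> real b - 1"
      by linarith
    then show "finite (higher_requiring Pk path injt hi pos t p u) \<and>
      real (card (higher_requiring Pk path injt hi pos t p u)) \<le> kseq b r h 0 - 1"
      using fin by simp
  qed
next
  case (Suc i)
  show ?case
  proof (intro allI impI)
    fix t u
    assume arr: "arrives Pk path injt pos t p (Suc i)" and u: "u \<in> set (path p)"
    have ins: "in_sys Pk path injt pos t p" and pt: "pos t p = Suc i"
      and dis: "t = injt p \<or> pos (t - 1) p \<noteq> Suc i"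
      using arr unfolding arrives_def by auto
    have it: "injt p \<le> t" and ilen: "Suc i < length (path p) - 1"
      using ins pt unfolding in_sys_def by auto
    have tne: "t \<noteq> injt p" using pt pos_injt[OF pP] by auto
    then have it1: "injt p \<le> t - 1" and tS: "t = Suc (t - 1)" and dis': "pos (t - 1) p \<noteq> Suc i"
      using it dis by auto
    have "pos t p \<le> Suc (pos (t-1) p)" using pos_step[OF pP it1] tS by simp
    moreover have "pos (t-1) p \<le> pos t p" using pos_mono[OF pP it1] by simp
    ultimately have pt1: "pos (t-1) p = i" using pt dis' by linarith
    define t' where "t' = (LEAST s. injt p \<le> s \<and> pos s p = i)"
    have ex': "injt p \<le> t - 1 \<and> pos (t - 1) p = i" using it1 pt1 by simp
    have t'1: "injt p \<le> t' \<and> pos t' p = i" unfolding t'_def using LeastI[of "\<lambda>s. injt p \<le> s \<and> pos s p = i" "t-1", OF ex'] .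
    have t'2: "t' \<le> t - 1" unfolding t'_def using Least_le[of "\<lambda>s. injt p \<le> s \<and> pos s p = i" "t-1", OF ex'] .
    have posi: "pos s p = i" if "t' \<le> s" "s \<le> t - 1" for s
    proof -
      have "pos t' p \<le> pos s p" using pos_mono[OF pP _ that(1)] t'1 by blast
      moreover have "pos s p \<le> pos (t - 1) p" using pos_mono[OF pP _ that(2)] t'1 that(1) by linarith
      ultimately show ?thesis using t'1 pt1 by linarith
    qed
    have arr': "arrives Pk path injt pos t' p i"
    proof -
      have "in_sys Pk path injt pos t' p" using pP t'1 ilen unfolding in_sys_def by auto
      moreover have "t' = injt p \<or> pos (t' - 1) p \<noteq> i"
      proof (cases "t' = injt p")
        case False
        then have "injt p \<le> t' - 1" "t' - 1 < t'" using t'1 by auto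
        then show ?thesis using not_less_Least[of "t' - 1" "\<lambda>s. injt p \<le> s \<and> pos s p = i"]
          unfolding t'_def by auto
      qed simp
      ultimately show ?thesis unfolding arrives_def using t'1 by auto
    qed
    have IH: "finite (higher_requiring Pk path injt hi pos t' p u') \<and>
       real (card (higher_requiring Pk path injt hi pos t' p u')) \<le> kseq b r h i - 1"
      if "u' \<in> set (path p)" for u'
      using Suc.IH arr' that by blast
    define D where "D = t - t'"
    have tD: "t = t' + D" and D1: "1 \<le> D" using t'2 tS unfolding D_def by auto
    define K where "K = kseq b r h i"
    define Bu where "Bu = {q \<in> Pk. Suc t' \<le> injt q \<and> injt q < Suc t' + D \<and> u \<in> set (path q)}"
    have finBu: "finite Bu" and cBu: "real (card Bu) \<le> r * real D + real b"
      using adv unfolding adversary_def Bu_def by blast+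
    have subu: "higher_requiring Pk path injt hi pos t p u \<subseteq> higher_requiring Pk path injt hi pos t' p u \<union> Bu"
    proof
      fix q assume q: "q \<in> higher_requiring Pk path injt hi pos t p u"
      then have qP: "q \<in> Pk" "injt q \<le> t" "hi q p" "q \<noteq> p" "u \<in> set (drop (pos t q) (path q))"
        "pos t q < length (path q) - 1"
        unfolding higher_requiring_def in_sys_def by auto
      show "q \<in> higher_requiring Pk path injt hi pos t' p u \<union> Bu"
      proof (cases "injt q \<le> t'")
        case True
        have m: "pos t' q \<le> pos t q" using pos_mono[OF qP(1) True] t'2 tS by simp
        then have "u \<in> set (drop (pos t' q) (path q))" using qP(5) set_drop_subset_set_drop[OF m, of "path q"] by blast
        then show ?thesis using qP m True unfolding higher_requiring_def in_sys_def by auto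
      next
        case False
        then show ?thesis using qP tD unfolding Bu_def by (auto dest: in_set_dropD)
      qed
    qed
    have KD: "real D * (1 - r * real h) \<le> real h * (K + real b)"
    proof -
      define vi where "vi = path p ! i"
      define vj where "vj = path p ! Suc i"
      have vpp: "valid_path V E (path p)" using vp pP by blast
      have Evv: "E vi vj" using vpp ilen unfolding valid_path_def vi_def vj_def by auto
      have vi_in: "vi \<in> set (path p)" using ilen unfolding vi_def by simp
      define A where "A = higher_requiring Pk path injt hi pos t' p vi"
      have finA: "finite A" and cA: "real (card A) \<le> K - 1"
        using IH[OF vi_in] unfolding A_def K_def by auto
      define B where "B = {q \<in> Pk. Suc t' \<le> injt q \<and> injt q < Suc t' + (D - 1) \<and> vi \<in> set (path q)}"
      have finB: "finite B" and cB: "real (card B) \<le> r * real (D - 1) + real b"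
        using adv unfolding adversary_def B_def by blast+
      define w where "w = (D - 1) div h"
      have whD: "w * h \<le> D - 1" unfolding w_def by simp
      have wind: "\<forall>k. \<exists>x. k < w \<longrightarrow> (t' + k * h \<le> fst x \<and> fst x < t' + k * h + h \<and>
          sent E tr Pk path injt hi pos (fst x) (snd x) \<and> path (snd x) ! pos (fst x) (snd x) = vi \<and>
          snd x \<in> A \<union> B \<and> snd x \<in> Pk \<and> injt (snd x) \<le> fst x \<and>
          pos (fst x) (snd x) < length (path (snd x)) - 1)"
      proof
        fix k
        show "\<exists>x. k < w \<longrightarrow> (t' + k * h \<le> fst x \<and> fst x < t' + k * h + h \<and>
          sent E tr Pk path injt hi pos (fst x) (snd x) \<and> path (snd x) ! pos (fst x) (snd x) = vi \<and>
          snd x \<in> A \<union> B \<and> snd x \<in> Pk \<and> injt (snd x) \<le> fst x \<and>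
          pos (fst x) (snd x) < length (path (snd x)) - 1)"
        proof (cases "k < w")
          case False then show ?thesis by simp
        next
          case k: True
          obtain \<tau> where \<tau>: "t' + k * h \<le> \<tau>" "\<tau> < t' + k * h + h" "link_up E tr \<tau> vi vj"
            using TO Evv unfolding in_TO_def by blast
          have "k * h + h \<le> w * h" using k by (metis Suc_leI mult_Suc mult_le_mono1 add.commute)
          then have \<tau>t: "t' \<le> \<tau>" "Suc \<tau> \<le> t - 1" using \<tau> whD tD by auto
          have p\<tau>: "pos \<tau> p = i" "pos (Suc \<tau>) p = i" using posi \<tau>t by auto
          have ip\<tau>: "injt p \<le> \<tau>" using t'1 \<tau>t by simp
          have nsp: "\<not> sent E tr Pk path injt hi pos \<tau> p"
            using pos_Suc[OF pP ip\<tau>] p\<tau> by auto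
          define El where "El = {q. eligible E tr Pk path injt pos \<tau> vi q}"
          have ElF: "El \<subseteq> {q\<in>Pk. injt q \<le> \<tau> \<and> vi \<in> set (path q)}"
          proof
            fix q assume "q \<in> El"
            then have "q \<in> Pk" "injt q \<le> \<tau>" "pos \<tau> q < length (path q) - 1" "path q ! pos \<tau> q = vi"
              unfolding El_def eligible_def in_sys_def by auto
            moreover have "pos \<tau> q < length (path q)" using calculation(3) by linarith
            ultimately show "q \<in> {q\<in>Pk. injt q \<le> \<tau> \<and> vi \<in> set (path q)}"
              using nth_mem[of "pos \<tau> q" "path q"] by auto
          qed
          have finEl: "finite El" using rev_finite_subset[OF fin_inj ElF] .
          have pEl: "p \<in> El"
            using pP ip\<tau> p\<tau> ilen \<tau>(3) unfolding El_def eligible_def in_sys_def vi_def vj_def link_up_def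
            by auto
          obtain q where qEl: "q \<in> El" and qmax: "\<forall>q'\<in>El. q' \<noteq> q \<longrightarrow> hi q q'"
            using has_max[OF finEl _ ] pEl ElF by blast
          have qv: "path q ! pos \<tau> q = vi" and qP: "q \<in> Pk" "injt q \<le> \<tau>"
            "pos \<tau> q < length (path q) - 1"
            using qEl unfolding El_def eligible_def in_sys_def by auto
          have sq: "sent E tr Pk path injt hi pos \<tau> q"
            using qEl qmax qv unfolding sent_def El_def by auto
          have qp: "q \<noteq> p" using sq nsp by auto
          have hqp: "hi q p" using qmax pEl qp by auto
          have qAB: "q \<in> A \<union> B"
          proof (cases "injt q \<le> t'")
            case True
            have m: "pos t' q \<le> pos \<tau> q" using pos_mono[OF qP(1) True \<tau>t(1)] .
            have "vi \<in> set (drop (pos \<tau> q) (path q))" using qv qP(3) in_drop_nth[of "pos \<tau> q" "path q"]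
              by simp
            then have "vi \<in> set (drop (pos t' q) (path q))"
              using set_drop_subset_set_drop[OF m, of "path q"] by blast
            then show ?thesis using qP m True qp hqp unfolding A_def higher_requiring_def in_sys_def by auto
          next
            case False
            have "pos \<tau> q < length (path q)" using qP(3) by linarith
            then have "vi \<in> set (path q)" using qv nth_mem[of "pos \<tau> q" "path q"] by simp
            then show ?thesis using False qP \<tau>t tD unfolding B_def by auto
          qed
          show ?thesis
            using \<tau> sq qv qAB qP by (intro exI[of _ "(\<tau>, q)"]) auto
        qed
      qed
      obtain f where f: "\<forall>k. k < w \<longrightarrow> (t' + k * h \<le> fst (f k) \<and> fst (f k) < t' + k * h + h \<and>
          sent E tr Pk path injt hi pos (fst (f k)) (snd (f k)) \<and> path (snd (f k)) ! pos (fst (f k)) (snd (f k)) = vi \<and>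
          snd (f k) \<in> A \<union> B \<and> snd (f k) \<in> Pk \<and> injt (snd (f k)) \<le> fst (f k) \<and>
          pos (fst (f k)) (snd (f k)) < length (path (snd (f k))) - 1)"
        using choice[OF wind] by blast
      have ne: "snd (f k1) \<noteq> snd (f k2)" if k12: "k1 < k2" "k2 < w" for k1 k2
      proof
        assume eq: "snd (f k1) = snd (f k2)"
        define q where "q = snd (f k1)"
        define \<tau>1 where "\<tau>1 = fst (f k1)"
        define \<tau>2 where "\<tau>2 = fst (f k2)"
        have f1: "t' + k1 * h \<le> \<tau>1" "\<tau>1 < t' + k1 * h + h" "sent E tr Pk path injt hi pos \<tau>1 q"
          "path q ! pos \<tau>1 q = vi" "q \<in> Pk" "injt q \<le> \<tau>1" "pos \<tau>1 q < length (path q) - 1"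
          using f k12 unfolding q_def \<tau>1_def by auto
        have f2: "t' + k2 * h \<le> \<tau>2" "path q ! pos \<tau>2 q = vi" "pos \<tau>2 q < length (path q) - 1"
          using f k12 eq unfolding q_def \<tau>2_def by auto
        have "k1 * h + h \<le> k2 * h" using k12 by (metis Suc_leI mult_Suc mult_le_mono1 add.commute)
        then have lt: "Suc \<tau>1 \<le> \<tau>2" using f1 f2 by linarith
        have ps: "pos (Suc \<tau>1) q = Suc (pos \<tau>1 q)" using pos_Suc[OF f1(5) f1(6)] f1(3) by simp
        have "pos (Suc \<tau>1) q \<le> pos \<tau>2 q" using pos_mono[OF f1(5) _ lt] f1(6) by simp
        moreover have "distinct (path q)" using vp f1(5) unfolding valid_path_def by blast
        then have "pos \<tau>1 q = pos \<tau>2 q" using nth_eq_iff_index_eq[of "path q" "pos \<tau>1 q" "pos \<tau>2 q"]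
          f1(4,7) f2(2,3) by auto
        ultimately show False using ps by simp
      qed
      have inj: "inj_on (\<lambda>k. snd (f k)) {..<w}"
      proof (rule inj_onI)
        fix k1 k2 assume "k1 \<in> {..<w}" "k2 \<in> {..<w}" "snd (f k1) = snd (f k2)"
        then show "k1 = k2" using ne by (metis lessThan_iff linorder_neqE_nat)
      qed
      have img: "(\<lambda>k. snd (f k)) ` {..<w} \<subseteq> A \<union> B" using f by auto
      have "w = card ((\<lambda>k. snd (f k)) ` {..<w})" using card_image[OF inj] by simp
      also have "\<dots> \<le> card (A \<union> B)" using img finA finB by (simp add: card_mono)
      also have "\<dots> \<le> card A + card B" by (rule card_Un_le)
      finally have "real w \<le> real (card A) + real (card B)" by linarith
      then have wb: "real w \<le> K - 1 + r * real (D - 1) + real b" using cA cB by linarith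
      have "D - 1 < h * (w + 1)" unfolding w_def using nat_lt_div h1 by simp
      then have "D \<le> h * (w + 1)" by linarith
      then have "real D \<le> real h * (real w + 1)" by (metis of_nat_add of_nat_1 of_nat_le_iff of_nat_mult)
      also have "\<dots> \<le> real h * (K + r * real (D - 1) + real b)"
        using wb by (intro mult_left_mono) auto
      also have "\<dots> \<le> real h * (K + r * real D + real b)"
        using r0 by (intro mult_left_mono add_mono mult_left_mono) auto
      finally have "real D \<le> real h * (K + r * real D + real b)" .
      then show ?thesis by (simp add: algebra_simps)
    qed
    have IHu: "finite (higher_requiring Pk path injt hi pos t' p u)"
       "real (card (higher_requiring Pk path injt hi pos t' p u)) \<le> K - 1"
      using IH[OF u] unfolding K_def by auto
    have fin: "finite (higher_requiring Pk path injt hi pos t p u)"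
      using subu IHu(1) finBu by (meson finite_UnI rev_finite_subset)
    have "card (higher_requiring Pk path injt hi pos t p u) \<le>
          card (higher_requiring Pk path injt hi pos t' p u \<union> Bu)"
      using subu IHu(1) finBu by (simp add: card_mono)
    also have "\<dots> \<le> card (higher_requiring Pk path injt hi pos t' p u) + card Bu"
      by (rule card_Un_le)
    finally have "real (card (higher_requiring Pk path injt hi pos t p u)) \<le>
          real (card (higher_requiring Pk path injt hi pos t' p u)) + real (card Bu)"
      by linarith
    then have c: "real (card (higher_requiring Pk path injt hi pos t p u)) \<le> K - 1 + r * real D + real b"
      using IHu(2) cBu by linarith
    define c where "c = 1 - r * real h"
    have c0: "0 < c" using rh_lt unfolding c_def by simp
    have "r * (real D * c) \<le> r * (real h * (K + real b))"
      using KD r0 unfolding c_def by (rule mult_left_mono)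
    then have "(K + r * real D + real b) * c \<le> K + real b"
      unfolding c_def by (simp add: algebra_simps)
    then have "K + r * real D + real b \<le> (K + real b) / c"
      using c0 by (simp add: le_divide_eq)
    then have "real (card (higher_requiring Pk path injt hi pos t p u)) \<le> kseq b r h (Suc i) - 1"
      using c unfolding K_def c_def by simp
    then show "finite (higher_requiring Pk path injt hi pos t p u) \<and>
      real (card (higher_requiring Pk path injt hi pos t p u)) \<le> kseq b r h (Suc i) - 1"
      using fin by simp
  qed
qed

end


theorem lemma4:
  fixes V :: "'v set" and E :: "'v \<Rightarrow> 'v \<Rightarrow> bool"
    and tr :: "nat \<Rightarrow> 'v \<Rightarrow> bool" and h :: nat
    and Pk :: "'p set" and path :: "'p \<Rightarrow> 'v list" and injt :: "'p \<Rightarrow> nat"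
    and b :: nat and r :: real
    and hi :: "'p \<Rightarrow> 'p \<Rightarrow> bool" and pos :: "nat \<Rightarrow> 'p \<Rightarrow> nat"
    and p :: 'p and t :: nat and j :: nat and u :: 'v
  assumes "simple_graph V E"
    and "\<forall>q\<in>Pk. valid_path V E (path q)"
    and "1 \<le> h" and "in_TO E h tr"
    and "0 < b" and "0 \<le> r" and "r < 1 / real h"
    and "adversary Pk path injt b r"
    and "sis_priority Pk injt hi"
    and "sis_execution E tr Pk path injt hi pos"
    and "p \<in> Pk"
    and "arrives Pk path injt pos t p j"
    and "u \<in> set (path p)"
  shows "finite (higher_requiring Pk path injt hi pos t p u) \<and>
         real (card (higher_requiring Pk path injt hi pos t p u)) \<le> kseq b r h j - 1"
proof -
  interpret sis_setting V E tr h Pk path injt b r hi pos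
    using assms by (unfold_locales) auto
  show ?thesis using main[OF assms(11)] assms(12,13) by blast
qed

end
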